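(* Let $(\mathbb X,d,\delta)$ be a uniform dilation structure and $x\in\mathbb X$. Then there are $r>0$ and $\varepsilon_0>0$ such that for all $\varepsilon\in(0,\varepsilon_0]$ and all $u,v\in B^d(x,r)$ the expression $\Sigma^x_\varepsilon(u,v)=\delta^x_{\varepsilon^{-1}}\delta^{\delta^x_\varepsilon u}_\varepsilon v$ is defined and belongs to $U(x)$.
   Context: A quasimetric space $(\mathbb X,d)$ is a topological space $\mathbb X$ with a map $d:\mathbb X\times\mathbb X\to[0,\infty)$ such that: (i) $d(u,v)=0$ iff $u=v$; (ii) $d(u,v)\le c_{\mathbb X}\,d(v,u)$ for a constant $1\le c_{\mathbb X}<\infty$; (iii) $d(u,v)\le Q_{\mathbb X}(d(u,w)+d(w,v))$ for a constant $1\le Q_{\mathbb X}<\infty$; (iv) $d$ is upper semicontinuous in the first argument. The topology of $\mathbb X$ coincides with the one induced by $d$. $B^d(x,r)=\{y: d(y,x)<r\}$, $\bar B^d(x,r)$ its closure; boundedly compact means closed bounded sets are compact. A dilation structure $(\mathbb X,d,\delta)$ is a complete boundedly compact quasimetric space with $d$ continuous in both arguments, satisfying: (A0) For every $x$ and $\varepsilon\in(0,1]$ there are a neighborhood $U(x)$ of $x$ and homeomorphisms $\delta^x_\varepsilon:U(x)\to V_\varepsilon(x)$, $\delta^x_{\varepsilon^{-1}}:W_{\varepsilon^{-1}}(x)\to U(x)$ with $V_\varepsilon(x)\subseteq W_{\varepsilon^{-1}}(x)\subseteq U(x)$; the family is continuous in $\varepsilon$; there is $R>0$ with $\bar B^d(x,R)\subseteq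 U(x)$ for all $x$, and for all $\varepsilon<1$, $\tilde r>0$ with $\bar B^d(x,\tilde r)\subseteq U(x)$: $B^d(x,\tilde r\varepsilon)\subseteq\delta^x_\varepsilon B^d(x,\tilde r)\subset B^d(x,\tilde r)$. (A1) $\delta^x_\varepsilon x=x$, $\delta^x_1=\mathrm{id}$, $\lim_{\varepsilon\to0}\delta^x_\varepsilon y=x$ for $y\in U(x)$. (A2) $\delta^x_\varepsilon\delta^x_\mu u=\delta^x_{\varepsilon\mu}u$ whenever both sides are defined. (A3) $d^x(u,v)=\lim_{\varepsilon\to0}\frac1\varepsilon d(\delta^x_\varepsilon u,\delta^x_\varepsilon v)$ exists uniformly in $u,v\in\bar B^d(x,R)$. The dilation structure is uniform if the convergence in (A3) is also uniform in $x$ in any compact set. $\Sigma^x_\varepsilon(u,v)$ being defined means $v\in U(\delta^x_\varepsilon u)$ and $\delta^{\delta^x_\varepsilon u}_\varepsilon v\in W_{\varepsilon^{-1}}(x)$. *)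

theory Defs
  imports "HOL-Analysis.Analysis"
begin

text \<open>The space X is the whole type 'a (with its topology).  d is the quasi-distance.
  U x is the neighbourhood U(x); V x e is V_e(x) (for 0 < e <= 1);
  W x e is W_{1/e}(x) (for 0 < e <= 1), the domain of delta x (1/e).\<close>

definition qball :: "('a \<Rightarrow> 'a \<Rightarrow> real) \<Rightarrow> 'a \<Rightarrow> real \<Rightarrow> 'a set" where
  "qball d x r = {y. d y x < r}"

definition quasimetric_space :: "('a::topological_space \<Rightarrow> 'a \<Rightarrow> real) \<Rightarrow> bool" where
  "quasimetric_space d \<longleftrightarrow>
     (\<forall>u v. 0 \<le> d u v) \<and>
     (\<forall>u v. d u v = 0 \<longleftrightarrow> u = v) \<and>
     (\<exists>c\<ge>1. \<forall>u v. d u v \<le> c * d v u) \<and>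
     (\<exists>Q\<ge>1. \<forall>u v w. d u v \<le> Q * (d u w + d w v)) \<and>
     (\<forall>v u t. d u v < t \<longrightarrow> (\<exists>S. open S \<and> u \<in> S \<and> (\<forall>u'\<in>S. d u' v < t))) \<and>
     (\<forall>S. open S \<longleftrightarrow> (\<forall>x\<in>S. \<exists>r>0. qball d x r \<subseteq> S))"

definition qcomplete :: "('a::topological_space \<Rightarrow> 'a \<Rightarrow> real) \<Rightarrow> bool" where
  "qcomplete d \<longleftrightarrow>
     (\<forall>s::nat \<Rightarrow> 'a. (\<forall>e>0. \<exists>N. \<forall>m\<ge>N. \<forall>n\<ge>N. d (s m) (s n) < e) \<longrightarrow> (\<exists>l. s \<longlonglongrightarrow> l))"

definition qbounded :: "('a \<Rightarrow> 'a \<Rightarrow> real) \<Rightarrow> 'a set \<Rightarrow> bool" where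
  "qbounded d A \<longleftrightarrow> (\<exists>x r. A \<subseteq> qball d x r)"

definition boundedly_compact :: "('a::topological_space \<Rightarrow> 'a \<Rightarrow> real) \<Rightarrow> bool" where
  "boundedly_compact d \<longleftrightarrow> (\<forall>A. closed A \<and> qbounded d A \<longrightarrow> compact A)"

definition dil_dom :: "('a \<Rightarrow> 'a set) \<Rightarrow> ('a \<Rightarrow> real \<Rightarrow> 'a set) \<Rightarrow> 'a \<Rightarrow> real \<Rightarrow> 'a set" where
  "dil_dom U W x mu = (if mu \<le> 1 then U x else W x (1 / mu))"

definition dilation_structure ::
  "('a::topological_space \<Rightarrow> 'a \<Rightarrow> real) \<Rightarrow> ('a \<Rightarrow> 'a set) \<Rightarrow> ('a \<Rightarrow> real \<Rightarrow> 'a set)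
    \<Rightarrow> ('a \<Rightarrow> real \<Rightarrow> 'a set) \<Rightarrow> ('a \<Rightarrow> real \<Rightarrow> 'a \<Rightarrow> 'a) \<Rightarrow> real \<Rightarrow> bool" where
  "dilation_structure d U V W \<delta> R \<longleftrightarrow>
     quasimetric_space d \<and> qcomplete d \<and> boundedly_compact d \<and>
     continuous_on UNIV (\<lambda>p. d (fst p) (snd p)) \<and>
     \<comment> \<open>(A0)\<close>
     (\<forall>x. x \<in> interior (U x)) \<and>
     (\<forall>x. \<forall>e\<in>{0<..1}.
        (\<exists>g. homeomorphism (U x) (V x e) (\<delta> x e) g) \<and>
        (\<exists>g. homeomorphism (W x e) (U x) (\<delta> x (1 / e)) g) \<and>
        V x e \<subseteq> W x e \<and> W x e \<subseteq> U x) \<and>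
     (\<forall>x. \<forall>y\<in>U x. continuous_on {0<..1} (\<lambda>e. \<delta> x e y)) \<and>
     R > 0 \<and> (\<forall>x. closure (qball d x R) \<subseteq> U x) \<and>
     (\<forall>x. \<forall>e\<in>{0<..<1}. \<forall>r>0. closure (qball d x r) \<subseteq> U x \<longrightarrow>
        qball d x (r * e) \<subseteq> \<delta> x e ` qball d x r \<and> \<delta> x e ` qball d x r \<subset> qball d x r) \<and>
     \<comment> \<open>(A1)\<close>
     (\<forall>x. \<forall>e\<in>{0<..1}. \<delta> x e x = x) \<and>
     (\<forall>x. \<forall>y\<in>U x. \<delta> x 1 y = y) \<and>
     (\<forall>x. \<forall>y\<in>U x. ((\<lambda>e. \<delta> x e y) \<longlongrightarrow> x) (at_right 0)) \<and>
     \<comment> \<open>(A2)\<close>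
     (\<forall>x e mu u. 0 < e \<and> 0 < mu \<and> u \<in> dil_dom U W x mu \<and> \<delta> x mu u \<in> dil_dom U W x e
        \<and> u \<in> dil_dom U W x (e * mu) \<longrightarrow> \<delta> x e (\<delta> x mu u) = \<delta> x (e * mu) u) \<and>
     \<comment> \<open>(A3)\<close>
     (\<forall>x. \<exists>dx. \<forall>t>0. \<exists>\<eta>>0. \<forall>e\<in>{0<..<\<eta>}. e \<le> 1 \<longrightarrow>
        (\<forall>u\<in>closure (qball d x R). \<forall>v\<in>closure (qball d x R).
           \<bar>d (\<delta> x e u) (\<delta> x e v) / e - dx u v\<bar> < t))"

definition uniform_dilation_structure ::
  "('a::topological_space \<Rightarrow> 'a \<Rightarrow> real) \<Rightarrow> ('a \<Rightarrow> 'a set) \<Rightarrow> ('a \<Rightarrow> real \<Rightarrow> 'a set)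
    \<Rightarrow> ('a \<Rightarrow> real \<Rightarrow> 'a set) \<Rightarrow> ('a \<Rightarrow> real \<Rightarrow> 'a \<Rightarrow> 'a) \<Rightarrow> real \<Rightarrow> bool" where
  "uniform_dilation_structure d U V W \<delta> R \<longleftrightarrow>
     dilation_structure d U V W \<delta> R \<and>
     (\<exists>dd. \<forall>K. compact K \<longrightarrow> (\<forall>t>0. \<exists>\<eta>>0. \<forall>x\<in>K. \<forall>e\<in>{0<..<\<eta>}. e \<le> 1 \<longrightarrow>
        (\<forall>u\<in>closure (qball d x R). \<forall>v\<in>closure (qball d x R).
           \<bar>d (\<delta> x e u) (\<delta> x e v) / e - dd x u v\<bar> < t)))"

definition Sigma_defined ::
  "('a \<Rightarrow> 'a set) \<Rightarrow> ('a \<Rightarrow> real \<Rightarrow> 'a set) \<Rightarrow> ('a \<Rightarrow> real \<Rightarrow> 'a \<Rightarrow> 'a) \<Rightarrow> 'a \<Rightarrow> real \<Rightarrow> 'a \<Rightarrow> 'a \<Rightarrow> bool" where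
  "Sigma_defined U W \<delta> x e u v \<longleftrightarrow>
     v \<in> U (\<delta> x e u) \<and> \<delta> (\<delta> x e u) e v \<in> W x e"

definition Sigma :: "('a \<Rightarrow> real \<Rightarrow> 'a \<Rightarrow> 'a) \<Rightarrow> 'a \<Rightarrow> real \<Rightarrow> 'a \<Rightarrow> 'a \<Rightarrow> 'a" where
  "Sigma \<delta> x e u v = \<delta> x (1 / e) (\<delta> (\<delta> x e u) e v)"

end

theory Submission
  imports Defs
begin

lemma key_lemma:
  fixes d :: "'a::topological_space \<Rightarrow> 'a \<Rightarrow> real"
    and U :: "'a \<Rightarrow> 'a set" and V W :: "'a \<Rightarrow> real \<Rightarrow> 'a set"
    and \<delta> :: "'a \<Rightarrow> real \<Rightarrow> 'a \<Rightarrow> 'a" and R :: real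
  assumes uds: "uniform_dilation_structure d U V W \<delta> R"
    and K: "compact K" and t: "t > 0"
  shows "\<exists>\<eta>>0. \<eta> \<le> 1 \<and> (\<exists>\<rho>>0. \<rho> \<le> R \<and> (\<forall>y\<in>K. \<forall>v\<in>qball d y \<rho>. \<forall>\<epsilon>\<in>{0<..<\<eta>}.
            d (\<delta> y \<epsilon> v) y < t * \<epsilon>))"
proof -
  have ds: "dilation_structure d U V W \<delta> R" using uds unfolding uniform_dilation_structure_def by (rule conjunct1)
  note D = ds[unfolded dilation_structure_def]
  obtain dd where dd: "\<forall>K. compact K \<longrightarrow> (\<forall>t>0. \<exists>\<eta>>0. \<forall>x\<in>K. \<forall>e\<in>{0<..<\<eta>}. e \<le> 1 \<longrightarrow>
        (\<forall>u\<in>closure (qball d x R). \<forall>v\<in>closure (qball d x R).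
           \<bar>d (\<delta> x e u) (\<delta> x e v) / e - dd x u v\<bar> < t))"
    using conjunct2[OF uds[unfolded uniform_dilation_structure_def]] by (elim exE) assumption
  have Rpos: "R > 0" using D by (elim conjE) assumption
  have clU0: "\<forall>x. closure (qball d x R) \<subseteq> U x" using D by (elim conjE) assumption
  have A00: "\<forall>x. \<forall>e\<in>{0<..<1}. \<forall>r>0. closure (qball d x r) \<subseteq> U x \<longrightarrow>
        qball d x (r * e) \<subseteq> \<delta> x e ` qball d x r \<and> \<delta> x e ` qball d x r \<subset> qball d x r"
    using D by (elim conjE) assumption
  have A10: "\<forall>x. \<forall>e\<in>{0<..1}. \<delta> x e x = x" using D by (elim conjE) assumption
  have A20: "\<forall>x e mu u. 0 < e \<and> 0 < mu \<and> u \<in> dil_dom U W x mu \<and> \<delta> x mu u \<in> dil_dom U W x e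
        \<and> u \<in> dil_dom U W x (e * mu) \<longrightarrow> \<delta> x e (\<delta> x mu u) = \<delta> x (e * mu) u"
    using D by (elim conjE) assumption
  have dyy: "\<forall>u v. d u v = 0 \<longleftrightarrow> u = v" using D unfolding quasimetric_space_def by (elim conjE) assumption
  note clU = clU0[rule_format]
  note A0 = A00[rule_format]
  note A1 = A10[rule_format]
  note A2 = A20[rule_format]
  have ddK: "\<forall>t>0. \<exists>\<eta>>0. \<forall>x\<in>K. \<forall>e\<in>{0<..<\<eta>}. e \<le> 1 \<longrightarrow>
        (\<forall>u\<in>closure (qball d x R). \<forall>v\<in>closure (qball d x R).
           \<bar>d (\<delta> x e u) (\<delta> x e v) / e - dd x u v\<bar> < t)"
    using mp[OF spec[OF dd, of K] K] .
  then obtain \<eta>0 where \<eta>0: "\<eta>0 > 0" and unif0: "\<forall>x\<in>K. \<forall>e\<in>{0<..<\<eta>0}. e \<le> 1 \<longrightarrow>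
        (\<forall>u\<in>closure (qball d x R). \<forall>v\<in>closure (qball d x R).
           \<bar>d (\<delta> x e u) (\<delta> x e v) / e - dd x u v\<bar> < t)"
    using mp[OF spec[OF ddK, of t] t] by (elim exE conjE)
  have unif: "\<And>x e u v. x\<in>K \<Longrightarrow> e\<in>{0<..<\<eta>0} \<Longrightarrow> e \<le> 1 \<Longrightarrow>
        u\<in>closure (qball d x R) \<Longrightarrow> v\<in>closure (qball d x R) \<Longrightarrow>
           \<bar>d (\<delta> x e u) (\<delta> x e v) / e - dd x u v\<bar> < t"
    using unif0 by blast
  define \<eta> where "\<eta> = min \<eta>0 1"
  define \<epsilon>1 where "\<epsilon>1 = \<eta> / 2"
  define M where "M = R / \<epsilon>1 + 2 * t"
  define \<mu> where "\<mu> = min (1/2) (t / M)"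
  have \<eta>pos: "\<eta> > 0" "\<eta> \<le> 1" "\<eta> \<le> \<eta>0" using \<eta>0 by (auto simp: \<eta>_def)
  have e1: "\<epsilon>1 > 0" "\<epsilon>1 < \<eta>" "\<epsilon>1 < 1" using \<eta>pos by (auto simp: \<epsilon>1_def)
  have Mpos: "M > 0" using Rpos e1 t unfolding M_def by (simp add: add_pos_pos)
  have mu: "\<mu> > 0" "\<mu> < 1" "\<mu> * M \<le> t" using t Mpos
    by (auto simp: \<mu>_def min_def field_simps)
  have main: "\<forall>y\<in>K. \<forall>v\<in>qball d y (R * \<mu>). \<forall>\<epsilon>\<in>{0<..<\<eta>}. d (\<delta> y \<epsilon> v) y < t * \<epsilon>"
  proof (intro ballI)
    fix y v \<epsilon> assume y: "y \<in> K" and v: "v \<in> qball d y (R * \<mu>)" and e: "\<epsilon> \<in> {0<..<\<eta>}"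
    have e': "\<epsilon> > 0" "\<epsilon> < 1" "\<epsilon> < \<eta>0" using e \<eta>pos by auto
    obtain w where w: "w \<in> qball d y R" and vw: "v = \<delta> y \<mu> w"
    proof -
      have "qball d y (R * \<mu>) \<subseteq> \<delta> y \<mu> ` qball d y R" using A0[of \<mu> R y] mu Rpos clU[of y] by auto
      then show ?thesis using v that by blast
    qed
    have qU: "qball d y R \<subseteq> U y" using clU[of y] closure_subset by blast
    have wU: "w \<in> U y" using w qU by blast
    have vR: "v \<in> qball d y R"
    proof -
      have "R * \<mu> \<le> R" using Rpos mu by simp
      then show ?thesis using v by (auto simp: qball_def)
    qed
    have emu: "\<epsilon> * \<mu> > 0" "\<epsilon> * \<mu> \<le> 1" "\<epsilon> * \<mu> < \<eta>0"
    proof -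
      have "\<epsilon> * \<mu> \<le> \<epsilon>" using mult_left_le[of \<mu> \<epsilon>] e' mu by simp
      then show "\<epsilon> * \<mu> > 0" "\<epsilon> * \<mu> \<le> 1" "\<epsilon> * \<mu> < \<eta>0" using e' mu by (auto, linarith+)
    qed
    have eq: "\<delta> y \<epsilon> v = \<delta> y (\<epsilon> * \<mu>) w"
      unfolding vw
      apply (rule A2)
      using e' mu emu wU vw vR qU by (auto simp: dil_dom_def)
    have wcl: "w \<in> closure (qball d y R)" using w closure_subset by blast
    have ycl: "y \<in> closure (qball d y R)"
    proof -
      have "d y y = 0" using dyy by blast
      then have "y \<in> qball d y R" using Rpos by (simp add: qball_def)
      then show ?thesis using closure_subset by blast
    qed
    have i1: "\<bar>d (\<delta> y (\<epsilon>*\<mu>) w) (\<delta> y (\<epsilon>*\<mu>) y) / (\<epsilon>*\<mu>) - dd y w y\<bar> < t"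
      using unif[OF y _ _ wcl ycl] emu by auto
    have i2: "\<bar>d (\<delta> y \<epsilon>1 w) (\<delta> y \<epsilon>1 y) / \<epsilon>1 - dd y w y\<bar> < t"
      using unif[OF y _ _ wcl ycl] e1 \<eta>pos by auto
    have f1: "\<delta> y (\<epsilon>*\<mu>) y = y" using A1 emu by auto
    have f2: "\<delta> y \<epsilon>1 y = y" using A1 e1 by auto
    have b1: "d (\<delta> y \<epsilon>1 w) y < R"
      using A0[of \<epsilon>1 R y] e1 Rpos clU[of y] w by (auto simp: qball_def)
    have b2: "d (\<delta> y \<epsilon>1 w) y / \<epsilon>1 < R / \<epsilon>1" using b1 e1 by (simp add: divide_strict_right_mono)
    have b3: "d (\<delta> y (\<epsilon>*\<mu>) w) y / (\<epsilon>*\<mu>) < M"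
      using i1[unfolded f1] i2[unfolded f2] b2 unfolding M_def by linarith
    have "d (\<delta> y (\<epsilon>*\<mu>) w) y < (\<epsilon>*\<mu>) * M" using b3 emu by (simp add: field_simps)
    also have "\<dots> = \<epsilon> * (\<mu> * M)" by simp
    also have "\<dots> \<le> \<epsilon> * t" using mu e' by (intro mult_left_mono) auto
    finally show "d (\<delta> y \<epsilon> v) y < t * \<epsilon>" using eq by (simp add: mult.commute)
  qed
  have "R * \<mu> > 0" "R * \<mu> \<le> R" using Rpos mu by auto
  then show ?thesis using main \<eta>pos by blast
qed

theorem proposition4:
  fixes d :: "'a::topological_space \<Rightarrow> 'a \<Rightarrow> real"
    and U :: "'a \<Rightarrow> 'a set" and V W :: "'a \<Rightarrow> real \<Rightarrow> 'a set"
    and \<delta> :: "'a \<Rightarrow> real \<Rightarrow> 'a \<Rightarrow> 'a" and R :: real and x :: 'a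
  assumes "uniform_dilation_structure d U V W \<delta> R"
  shows "\<exists>r>0. \<exists>\<epsilon>0>0. \<forall>\<epsilon>\<in>{0<..\<epsilon>0}. \<forall>u\<in>qball d x r. \<forall>v\<in>qball d x r.
           Sigma_defined U W \<delta> x \<epsilon> u v \<and> Sigma \<delta> x \<epsilon> u v \<in> U x"
proof -
  note uds = assms
  have ds: "dilation_structure d U V W \<delta> R" using uds unfolding uniform_dilation_structure_def by (rule conjunct1)
  note D = ds[unfolded dilation_structure_def]
  have qm: "quasimetric_space d" using D by (elim conjE) assumption
  have bc: "boundedly_compact d" using D by (elim conjE) assumption
  have cont: "continuous_on UNIV (\<lambda>p. d (fst p) (snd p))" using D by (elim conjE) assumption
  have Rpos: "R > 0" using D by (elim conjE) assumption
  have clU0: "\<forall>x. closure (qball d x R) \<subseteq> U x" using D by (elim conjE) assumption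
  have A00: "\<forall>x. \<forall>e\<in>{0<..<1}. \<forall>r>0. closure (qball d x r) \<subseteq> U x \<longrightarrow>
        qball d x (r * e) \<subseteq> \<delta> x e ` qball d x r \<and> \<delta> x e ` qball d x r \<subset> qball d x r"
    using D by (elim conjE) assumption
  have H0: "\<forall>x. \<forall>e\<in>{0<..1}.
        (\<exists>g. homeomorphism (U x) (V x e) (\<delta> x e) g) \<and>
        (\<exists>g. homeomorphism (W x e) (U x) (\<delta> x (1 / e)) g) \<and>
        V x e \<subseteq> W x e \<and> W x e \<subseteq> U x" using D by (elim conjE) assumption
  have dpos: "\<forall>u v. 0 \<le> d u v" using qm unfolding quasimetric_space_def by (elim conjE) assumption
  have dyy: "\<forall>u v. d u v = 0 \<longleftrightarrow> u = v" using qm unfolding quasimetric_space_def by (elim conjE) assumption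
  have cex: "\<exists>c\<ge>1. \<forall>u v. d u v \<le> c * d v u" using qm unfolding quasimetric_space_def by (elim conjE) assumption
  have Qex: "\<exists>Q\<ge>1. \<forall>u v w. d u v \<le> Q * (d u w + d w v)" using qm unfolding quasimetric_space_def by (elim conjE) assumption
  obtain c where c1: "c \<ge> 1" and csym: "\<And>u v. d u v \<le> c * d v u" using cex by blast
  obtain Q where Q1: "Q \<ge> 1" and tri: "\<And>u v w. d u v \<le> Q * (d u w + d w v)" using Qex by blast
  note clU = clU0[rule_format]
  note A0 = A00[rule_format]
  define K where "K = closure (qball d x R)"
  have contx: "continuous_on UNIV (\<lambda>z. d z x)"
  proof -
    have "continuous_on UNIV (\<lambda>z. (z, x))" by (intro continuous_intros)
    from continuous_on_compose2[OF cont this] show ?thesis by simp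
  qed
  have clo: "closed {z. d z x \<le> R}"
    by (rule closed_Collect_le[OF contx]) (intro continuous_intros)
  have Ksub: "K \<subseteq> {z. d z x \<le> R}"
    unfolding K_def by (rule closure_minimal[OF _ clo]) (auto simp: qball_def)
  have "qbounded d K" unfolding qbounded_def
  proof (intro exI)
    show "K \<subseteq> qball d x (R + 1)" using Ksub by (auto simp: qball_def)
  qed
  moreover have "closed K" unfolding K_def by simp
  ultimately have Kc: "compact K" using bc unfolding boundedly_compact_def by blast
  have qK: "qball d x R \<subseteq> K" unfolding K_def by (rule closure_subset)
  define t where "t = R / (2 * Q)"
  have tpos: "t > 0" using Rpos Q1 by (simp add: t_def)
  have t2: "2 * Q * t = R" using Q1 by (simp add: t_def)
  have tR: "t < R"
  proof -
    have "t * 2 \<le> t * (2 * Q)" using tpos Q1 by (intro mult_left_mono) auto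
    then have "t * 2 \<le> R" using t2 by (simp add: algebra_simps)
    then show ?thesis using tpos by linarith
  qed
  obtain \<eta> where \<eta>': "\<eta> > 0 \<and> \<eta> \<le> 1 \<and> (\<exists>\<rho>>0. \<rho> \<le> R \<and> (\<forall>y\<in>K. \<forall>v\<in>qball d y \<rho>. \<forall>\<epsilon>\<in>{0<..<\<eta>}.
            d (\<delta> y \<epsilon> v) y < t * \<epsilon>))"
    using key_lemma[OF uds Kc tpos] by (elim exE) 
  obtain \<rho> where \<rho>': "\<rho> > 0 \<and> \<rho> \<le> R \<and> (\<forall>y\<in>K. \<forall>v\<in>qball d y \<rho>. \<forall>\<epsilon>\<in>{0<..<\<eta>}.
            d (\<delta> y \<epsilon> v) y < t * \<epsilon>)"
    using conjunct2[OF conjunct2[OF \<eta>']] by (elim exE)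
  have \<eta>: "\<eta> > 0" "\<eta> \<le> 1" using \<eta>' by auto
  have \<rho>: "\<rho> > 0" "\<rho> \<le> R" using \<rho>' by auto
  have kl: "\<And>y v \<epsilon>. y\<in>K \<Longrightarrow> v\<in>qball d y \<rho> \<Longrightarrow> \<epsilon>\<in>{0<..<\<eta>} \<Longrightarrow> d (\<delta> y \<epsilon> v) y < t * \<epsilon>"
    using \<rho>' by auto
  define r where "r = \<rho> / (2 * Q)"
  define \<epsilon>0 where "\<epsilon>0 = min (\<eta> / 2) (\<rho> / (2 * Q * c * t))"
  have rpos: "r > 0" using \<rho> Q1 by (simp add: r_def)
  have r\<rho>: "r \<le> \<rho>" using \<rho> Q1 unfolding r_def by (simp add: field_simps)
  have Qr: "Q * r = \<rho> / 2" using Q1 unfolding r_def by simp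
  have e0pos: "\<epsilon>0 > 0" using \<eta> \<rho> Q1 c1 tpos by (simp add: \<epsilon>0_def)
  have main: "\<forall>\<epsilon>\<in>{0<..\<epsilon>0}. \<forall>u\<in>qball d x r. \<forall>v\<in>qball d x r.
           Sigma_defined U W \<delta> x \<epsilon> u v \<and> Sigma \<delta> x \<epsilon> u v \<in> U x"
  proof (intro ballI)
    fix \<epsilon> u v assume e: "\<epsilon> \<in> {0<..\<epsilon>0}" and u: "u \<in> qball d x r" and v: "v \<in> qball d x r"
    have epos: "\<epsilon> > 0" and ee0: "\<epsilon> \<le> \<epsilon>0" using e by auto
    have e\<eta>: "\<epsilon> < \<eta>" using ee0 \<eta> unfolding \<epsilon>0_def by linarith
    have e1: "\<epsilon> < 1" using e\<eta> \<eta> by linarith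
    have ect: "Q * c * t * \<epsilon> \<le> \<rho> / 2"
    proof -
      have "\<epsilon> \<le> \<rho> / (2 * Q * c * t)" using ee0 unfolding \<epsilon>0_def by linarith
      moreover have "2 * Q * c * t > 0" using Q1 c1 tpos by simp
      ultimately have "\<epsilon> * (2 * Q * c * t) \<le> \<rho>" by (simp add: field_simps)
      then show ?thesis by (simp add: field_simps)
    qed
    have "d x x = 0" using dyy by blast
    then have xK: "x \<in> K" using qK Rpos by (auto simp: qball_def)
    define y where "y = \<delta> x \<epsilon> u"
    have u\<rho>: "u \<in> qball d x \<rho>" using u r\<rho> by (auto simp: qball_def)
    have dyx: "d y x < t * \<epsilon>" unfolding y_def using kl[OF xK u\<rho>] epos e\<eta> by auto
    have dxy: "d x y < c * t * \<epsilon>"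
    proof -
      have "d x y \<le> c * d y x" by (rule csym)
      also have "\<dots> < c * (t * \<epsilon>)" using dyx c1 by simp
      finally show ?thesis by simp
    qed
    have dvx: "d v x < r" using v by (simp add: qball_def)
    have dvy: "d v y < \<rho>"
    proof -
      have "d v y \<le> Q * (d v x + d x y)" by (rule tri)
      also have "\<dots> < Q * (r + c * t * \<epsilon>)" using dvx dxy Q1 by simp
      also have "\<dots> = Q * r + Q * c * t * \<epsilon>" by (simp add: algebra_simps)
      also have "\<dots> \<le> \<rho>" using Qr ect by simp
      finally show ?thesis .
    qed
    have yK: "y \<in> K"
    proof -
      have "t * \<epsilon> \<le> t" using tpos e1 by simp
      then have "y \<in> qball d x R" using dyx tR by (simp add: qball_def)
      then show ?thesis using qK by blast
    qed
    have vUy: "v \<in> U y"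
    proof -
      have "v \<in> qball d y R" using dvy \<rho> by (simp add: qball_def)
      then show ?thesis using clU[of y] closure_subset by blast
    qed
    define z where "z = \<delta> y \<epsilon> v"
    have dzy: "d z y < t * \<epsilon>" unfolding z_def using kl[OF yK _] dvy epos e\<eta> by (auto simp: qball_def)
    have dzx: "d z x < R * \<epsilon>"
    proof -
      have "d z x \<le> Q * (d z y + d y x)" by (rule tri)
      also have "\<dots> < Q * (t * \<epsilon> + t * \<epsilon>)" using dzy dyx Q1 by (intro mult_strict_left_mono add_strict_mono) auto
      also have "\<dots> = (2 * Q * t) * \<epsilon>" by (simp add: algebra_simps)
      finally show ?thesis using t2 by simp
    qed
    have eI: "\<epsilon> \<in> {0<..1}" using epos e1 by simp
    note HH = bspec[OF spec[OF H0, of x] eI]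
    obtain g1 where hom1: "homeomorphism (U x) (V x \<epsilon>) (\<delta> x \<epsilon>) g1" using HH by blast
    obtain g2 where hom2: "homeomorphism (W x \<epsilon>) (U x) (\<delta> x (1 / \<epsilon>)) g2" using HH by blast
    have VW: "V x \<epsilon> \<subseteq> W x \<epsilon>" using HH by blast
    have im1: "\<delta> x \<epsilon> ` U x = V x \<epsilon>" using hom1 by (simp add: homeomorphism_def)
    have im2: "\<delta> x (1/\<epsilon>) ` W x \<epsilon> = U x" using hom2 by (simp add: homeomorphism_def)
    have "qball d x (R * \<epsilon>) \<subseteq> \<delta> x \<epsilon> ` qball d x R" using A0[of \<epsilon> R x] epos e1 Rpos clU[of x] by auto
    also have "\<dots> \<subseteq> \<delta> x \<epsilon> ` U x" using clU[of x] closure_subset by blast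
    finally have "z \<in> W x \<epsilon>" using dzx im1 VW by (auto simp: qball_def)
    then have zW: "\<delta> (\<delta> x \<epsilon> u) \<epsilon> v \<in> W x \<epsilon>" by (simp add: z_def y_def)
    show "Sigma_defined U W \<delta> x \<epsilon> u v \<and> Sigma \<delta> x \<epsilon> u v \<in> U x"
      unfolding Sigma_defined_def Sigma_def using zW vUy im2 by (auto simp: y_def)
  qed
  show ?thesis using main rpos e0pos by blast
qed

end
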